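(* Let $\mathcal{A}\subseteq\mathbb{R}^a$ be a closed convex set with recession cone $\mathcal{A}_\infty$. Consider the following properties. (S1) There is $a^0\in\mathbb{R}^a$ with $\mathcal{A}\subseteq\{a^0\}+\mathcal{A}_\infty$. (S2) There are $k\in\mathbb{N}$ and $a^1,\dots,a^k\in\mathbb{R}^a$ with $\mathcal{A}\subseteq\operatorname{conv}\{a^1,\dots,a^k\}+\mathcal{A}_\infty$. (S3) $\sup_{x\in\mathcal{A}}\inf_{y\in\mathcal{A}_\infty}\|x-y\|_1<\infty$. Then (S1) implies (S2), and (S2) is equivalent to (S3). If in addition $\mathcal{A}_\infty$ has nonempty interior, then (S1), (S2) and (S3) are all equivalent.
   Context: The recession cone of a set $X\subseteq\mathbb{R}^n$ is $X_\infty=\{d\in\mathbb{R}^n: x+\lambda d\in X \text{ for all } x\in X,\ \lambda\ge 0\}$. $\|\cdot\|_1$ denotes the $\ell_1$ norm. *)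

theory Defs
  imports "HOL-Analysis.Analysis"
begin

definition recession_cone :: "(real ^ 'n) set \<Rightarrow> (real ^ 'n) set" where
  "recession_cone X = {d. \<forall>x\<in>X. \<forall>t::real. t \<ge> 0 \<longrightarrow> x + t *\<^sub>R d \<in> X}"

definition norm1 :: "real ^ 'n \<Rightarrow> real" where
  "norm1 x = (\<Sum>i\<in>UNIV. \<bar>x $ i\<bar>)"

definition msum :: "(real ^ 'n) set \<Rightarrow> (real ^ 'n) set \<Rightarrow> (real ^ 'n) set" where
  "msum P Q = {p + q | p q. p \<in> P \<and> q \<in> Q}"

definition S1 :: "(real ^ 'n) set \<Rightarrow> bool" where
  "S1 A \<longleftrightarrow> (\<exists>a0. A \<subseteq> msum {a0} (recession_cone A))"

definition S2 :: "(real ^ 'n) set \<Rightarrow> bool" where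
  "S2 A \<longleftrightarrow> (\<exists>P. finite P \<and> A \<subseteq> msum (convex hull P) (recession_cone A))"

definition S3 :: "(real ^ 'n) set \<Rightarrow> bool" where
  "S3 A \<longleftrightarrow> bdd_above ((\<lambda>x. INF y\<in>recession_cone A. norm1 (x - y)) ` A)"

end

theory Submission
  imports Defs
begin

lemma rc_add: "d1 \<in> recession_cone A \<Longrightarrow> d2 \<in> recession_cone A \<Longrightarrow> d1 + d2 \<in> recession_cone A"
  unfolding recession_cone_def
proof (safe)
  fix x t assume h1: "\<forall>x\<in>A. \<forall>t::real. t \<ge> 0 \<longrightarrow> x + t *\<^sub>R d1 \<in> A"
    and h2: "\<forall>x\<in>A. \<forall>t::real. t \<ge> 0 \<longrightarrow> x + t *\<^sub>R d2 \<in> A" and x: "x \<in> A" and t: "(0::real) \<le> t"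
  have "x + t *\<^sub>R d1 \<in> A" using h1 x t by blast
  hence "(x + t *\<^sub>R d1) + t *\<^sub>R d2 \<in> A" using h2 t by blast
  thus "x + t *\<^sub>R (d1 + d2) \<in> A" by (simp add: algebra_simps)
qed

lemma rc_scale: "d \<in> recession_cone A \<Longrightarrow> (s::real) \<ge> 0 \<Longrightarrow> s *\<^sub>R d \<in> recession_cone A"
  unfolding recession_cone_def
proof (safe)
  fix x t assume h: "\<forall>x\<in>A. \<forall>t::real. t \<ge> 0 \<longrightarrow> x + t *\<^sub>R d \<in> A" and s: "s \<ge> 0"
    and x: "x \<in> A" and t: "(0::real) \<le> t"
  have "x + (t * s) *\<^sub>R d \<in> A" using h x t s by simp
  thus "x + t *\<^sub>R s *\<^sub>R d \<in> A" by simp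
qed

lemma rc_zero: "0 \<in> recession_cone A"
  unfolding recession_cone_def by simp

lemma norm1_nonneg: "norm1 x \<ge> 0"
  unfolding norm1_def by (simp add: sum_nonneg)

lemma norm_le_norm1: "norm x \<le> norm1 x"
  unfolding norm1_def by (rule norm_le_l1_cart)

lemma norm1_le: "norm1 (x::real^'n) \<le> real CARD('n) * norm x"
proof -
  have "norm1 x \<le> (\<Sum>i\<in>(UNIV::'n set). norm x)"
    unfolding norm1_def by (rule sum_mono) (rule component_le_norm_cart)
  thus ?thesis by simp
qed

lemma S2_S3:
  fixes A :: "(real ^ 'n) set"
  shows "S2 A \<Longrightarrow> S3 A"
proof -
  assume "S2 A"
  then obtain P where P: "finite P" "A \<subseteq> msum (convex hull P) (recession_cone A)"
    unfolding S2_def by blast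
  have "bounded (convex hull P)" using P(1) by (simp add: compact_imp_bounded finite_imp_compact_convex_hull)
  then obtain B where B: "\<And>c. c \<in> convex hull P \<Longrightarrow> norm c \<le> B" by (meson bounded_iff)
  show "S3 A" unfolding S3_def bdd_above_def
  proof (intro exI ballI)
    fix z assume "z \<in> (\<lambda>x. INF y\<in>recession_cone A. norm1 (x - y)) ` A"
    then obtain x where x: "x \<in> A" and z: "z = (INF y\<in>recession_cone A. norm1 (x - y))" by blast
    obtain c d where cd: "c \<in> convex hull P" "d \<in> recession_cone A" "x = c + d"
      using P(2) x unfolding msum_def by blast
    have "z \<le> norm1 (x - d)" unfolding z
      by (rule cINF_lower) (auto intro: bdd_belowI2[where m=0] simp: norm1_nonneg cd)
    also have "\<dots> = norm1 c" using cd by simp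
    also have "\<dots> \<le> real CARD('n) * B"
      using norm1_le[of c] B[OF cd(1)] by (smt (verit) mult_left_mono of_nat_0_le_iff)
    finally show "z \<le> real CARD('n) * B" .
  qed
qed

lemma S3_S2:
  fixes A :: "(real ^ 'n) set"
  shows "S3 A \<Longrightarrow> S2 A"
proof -
  assume "S3 A"
  then obtain M where M: "\<And>x. x \<in> A \<Longrightarrow> (INF y\<in>recession_cone A. norm1 (x - y)) \<le> M"
    unfolding S3_def bdd_above_def by blast
  define R where "R = max 1 (M + 1)"
  have R: "R > 0" "M < R" unfolding R_def by auto
  obtain S :: "(real^'n) set" where S: "finite S"
    "cbox (0 - (\<Sum>i\<in>Basis. R*\<^sub>Ri)) (0 + (\<Sum>i\<in>Basis. R*\<^sub>Ri)) = convex hull S"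
    using cube_convex_hull[OF R(1)] by blast
  have ball_sub: "v \<in> convex hull S" if "norm v \<le> R" for v :: "real^'n"
  proof -
    have "v \<in> cbox (0 - (\<Sum>i\<in>Basis. R*\<^sub>Ri)) (0 + (\<Sum>i\<in>Basis. R*\<^sub>Ri))"
    proof (subst mem_box, intro ballI)
      fix j :: "real^'n" assume j: "j \<in> Basis"
      have e: "(\<Sum>i\<in>Basis. R*\<^sub>Ri) \<bullet> j = R"
        using j by (simp add: inner_sum_left inner_Basis if_distrib[of "\<lambda>x. R * x"] sum.delta cong: if_cong)
      have "\<bar>v \<bullet> j\<bar> \<le> norm v" using j by (rule Basis_le_norm)
      thus "(0 - (\<Sum>i\<in>Basis. R*\<^sub>Ri)) \<bullet> j \<le> v \<bullet> j \<and> v \<bullet> j \<le> (0 + (\<Sum>i\<in>Basis. R*\<^sub>Ri)) \<bullet> j"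
        using e that by (simp add: inner_diff_left) linarith
    qed
    thus ?thesis using S(2) by simp
  qed
  show "S2 A" unfolding S2_def
  proof (intro exI conjI subsetI)
    show "finite S" by fact
    fix x assume x: "x \<in> A"
    have "(INF y\<in>recession_cone A. norm1 (x - y)) < R" using M[OF x] R by linarith
    then obtain y where y: "y \<in> recession_cone A" "norm1 (x - y) < R"
    proof -
      have bb: "bdd_below ((\<lambda>y. norm1 (x - y)) ` recession_cone A)"
        by (rule bdd_belowI2[where m=0]) (simp add: norm1_nonneg)
      have ne: "recession_cone A \<noteq> {}" using rc_zero by blast
      show ?thesis using cINF_less_iff[OF ne bb] that \<open>(INF y\<in>recession_cone A. norm1 (x - y)) < R\<close> by blast
    qed
    have "x - y \<in> convex hull S" using ball_sub norm_le_norm1[of "x-y"] y(2) by force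
    thus "x \<in> msum (convex hull S) (recession_cone A)" unfolding msum_def
      using y(1) by (intro CollectI exI[of _ "x - y"] exI[of _ y]) simp
  qed
qed

lemma S2_S1:
  fixes A :: "(real ^ 'n) set"
  assumes "interior (recession_cone A) \<noteq> {}" "S2 A"
  shows "S1 A"
proof -
  obtain P where P: "finite P" "A \<subseteq> msum (convex hull P) (recession_cone A)"
    using assms(2) unfolding S2_def by blast
  have "bounded (convex hull P)" using P(1) by (simp add: compact_imp_bounded finite_imp_compact_convex_hull)
  then obtain B0 where B0: "\<And>c. c \<in> convex hull P \<Longrightarrow> norm c \<le> B0" by (meson bounded_iff)
  define B where "B = max 1 B0"
  have B: "B > 0" "\<And>c. c \<in> convex hull P \<Longrightarrow> norm c \<le> B" using B0 unfolding B_def by force+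
  obtain d where d: "d \<in> interior (recession_cone A)" using assms(1) by blast
  then obtain r where r: "r > 0" "ball d r \<subseteq> recession_cone A"
    using mem_interior by blast
  define lam where "lam = 2 * B / r"
  have lam: "lam > 0" unfolding lam_def using B r by simp
  have key: "c + lam *\<^sub>R d \<in> recession_cone A" if c: "c \<in> convex hull P" for c
  proof -
    have "norm ((1/lam) *\<^sub>R c) = norm c / lam" using lam by simp
    also have "\<dots> \<le> B / lam" using B(2)[OF c] lam by (simp add: divide_right_mono)
    also have "\<dots> = r / 2" unfolding lam_def using B r by (simp add: field_simps)
    also have "\<dots> < r" using r by simp
    finally have "d + (1/lam) *\<^sub>R c \<in> ball d r" by (simp add: dist_norm)
    hence "d + (1/lam) *\<^sub>R c \<in> recession_cone A" using r by blast
    hence "lam *\<^sub>R (d + (1/lam) *\<^sub>R c) \<in> recession_cone A" using lam by (simp add: rc_scale)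
    moreover have "lam *\<^sub>R (d + (1/lam) *\<^sub>R c) = c + lam *\<^sub>R d"
      using lam by (simp add: algebra_simps)
    ultimately show ?thesis by simp
  qed
  show "S1 A" unfolding S1_def
  proof (intro exI subsetI)
    fix x assume "x \<in> A"
    then obtain c y where cy: "c \<in> convex hull P" "y \<in> recession_cone A" "x = c + y"
      using P(2) unfolding msum_def by blast
    have "(c + lam *\<^sub>R d) + y \<in> recession_cone A" using key[OF cy(1)] cy(2) by (rule rc_add)
    moreover have "x = (- lam *\<^sub>R d) + ((c + lam *\<^sub>R d) + y)" using cy by simp
    ultimately show "x \<in> msum {- lam *\<^sub>R d} (recession_cone A)" unfolding msum_def by blast
  qed
qed

lemma S1_S2: "S1 A \<Longrightarrow> S2 A"
  unfolding S1_def S2_def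
proof -
  assume "\<exists>a0. A \<subseteq> msum {a0} (recession_cone A)"
  then obtain a0 where "A \<subseteq> msum {a0} (recession_cone A)" by blast
  thus "\<exists>P. finite P \<and> A \<subseteq> msum (convex hull P) (recession_cone A)"
    by (intro exI[of _ "{a0}"]) simp
qed

theorem mainTheorem2:
  fixes A :: "(real ^ 'n) set"
  assumes "closed A" and "convex A"
  shows "(S1 A \<longrightarrow> S2 A) \<and> (S2 A \<longleftrightarrow> S3 A) \<and>
         (interior (recession_cone A) \<noteq> {} \<longrightarrow> (S1 A \<longleftrightarrow> S2 A) \<and> (S2 A \<longleftrightarrow> S3 A))"
  using S1_S2 S2_S3 S3_S2 S2_S1 by blast

end
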